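(* Let $G$ be a finite simple $2$-connected graph with at least $4$ vertices and $\delta_2(G)\geqslant 4$. Then $G$ contains a chorded cycle.
   Context: $\delta_2(G)$ is the minimum of $|N_G(u)\cup N_G(v)|$ over all pairs of distinct nonadjacent vertices $u,v$ of $G$ (i.e. over independent sets of size 2). A chorded cycle is a cycle together with an edge of the graph, not on the cycle, joining two vertices of the cycle. *)

theory Defs
  imports Main
begin

definition simple_graph :: "'a set \<Rightarrow> ('a \<Rightarrow> 'a \<Rightarrow> bool) \<Rightarrow> bool" where
  "simple_graph V E \<longleftrightarrow> finite V \<and> (\<forall>u v. E u v \<longrightarrow> E v u) \<and> (\<forall>v. \<not> E v v)
     \<and> (\<forall>u v. E u v \<longrightarrow> u \<in> V \<and> v \<in> V)"

definition nbhd :: "'a set \<Rightarrow> ('a \<Rightarrow> 'a \<Rightarrow> bool) \<Rightarrow> 'a \<Rightarrow> 'a set" where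
  "nbhd V E v = {u \<in> V. E v u}"

fun is_walk :: "'a set \<Rightarrow> ('a \<Rightarrow> 'a \<Rightarrow> bool) \<Rightarrow> 'a list \<Rightarrow> bool" where
  "is_walk V E [] = False"
| "is_walk V E [v] = (v \<in> V)"
| "is_walk V E (u # v # vs) = (u \<in> V \<and> E u v \<and> is_walk V E (v # vs))"

definition connected_on :: "'a set \<Rightarrow> ('a \<Rightarrow> 'a \<Rightarrow> bool) \<Rightarrow> bool" where
  "connected_on S E \<longleftrightarrow> S \<noteq> {} \<and>
     (\<forall>u\<in>S. \<forall>v\<in>S. \<exists>p. is_walk S E p \<and> hd p = u \<and> last p = v)"

definition two_connected :: "'a set \<Rightarrow> ('a \<Rightarrow> 'a \<Rightarrow> bool) \<Rightarrow> bool" where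
  "two_connected V E \<longleftrightarrow> card V \<ge> 3 \<and> connected_on V E \<and>
     (\<forall>x\<in>V. connected_on (V - {x}) E)"

text \<open>delta_2(G) >= k: every pair of distinct nonadjacent vertices has
  |N(u) \<union> N(v)| >= k (vacuous if there is no such pair).\<close>
definition delta2_ge :: "'a set \<Rightarrow> ('a \<Rightarrow> 'a \<Rightarrow> bool) \<Rightarrow> nat \<Rightarrow> bool" where
  "delta2_ge V E k \<longleftrightarrow> (\<forall>u\<in>V. \<forall>v\<in>V. u \<noteq> v \<and> \<not> E u v \<longrightarrow>
     card (nbhd V E u \<union> nbhd V E v) \<ge> k)"

definition is_cycle :: "'a set \<Rightarrow> ('a \<Rightarrow> 'a \<Rightarrow> bool) \<Rightarrow> 'a list \<Rightarrow> bool" where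
  "is_cycle V E c \<longleftrightarrow> length c \<ge> 3 \<and> distinct c \<and> set c \<subseteq> V \<and>
     (\<forall>i < length c. E (c ! i) (c ! ((i + 1) mod length c)))"

definition has_chorded_cycle :: "'a set \<Rightarrow> ('a \<Rightarrow> 'a \<Rightarrow> bool) \<Rightarrow> bool" where
  "has_chorded_cycle V E \<longleftrightarrow> (\<exists>c i j. is_cycle V E c \<and> i < length c \<and> j < length c \<and>
     E (c ! i) (c ! j) \<and> j \<noteq> (i + 1) mod length c \<and> i \<noteq> (j + 1) mod length c)"

end

theory Submission
  imports Defs
begin

lemma walk_edge: "is_walk V E p \<Longrightarrow> Suc i < length p \<Longrightarrow> E (p!i) (p!Suc i)"
proof (induction V E p arbitrary: i rule: is_walk.induct)
  case (3 V E u v vs)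
  then show ?case by (cases i) auto
qed auto

lemma walk_set: "is_walk V E p \<Longrightarrow> set p \<subseteq> V"
  by (induction V E p rule: is_walk.induct) auto

lemma walk_append: "xs \<noteq> [] \<Longrightarrow> ys \<noteq> [] \<Longrightarrow>
  is_walk V E (xs @ ys) = (is_walk V E xs \<and> is_walk V E ys \<and> E (last xs) (hd ys))"
proof (induction xs)
  case Nil then show ?case by simp
next
  case (Cons x xs)
  show ?case
  proof (cases xs)
    case Nil
    then show ?thesis using Cons.prems by (cases ys) auto
  next
    case (Cons z zs)
    then show ?thesis using Cons.IH Cons.prems by auto
  qed
qed

lemma walk_rev: "(\<forall>u v. E u v \<longrightarrow> E v u) \<Longrightarrow> is_walk V E xs \<Longrightarrow> is_walk V E (rev xs)"
proof (induction V E xs rule: is_walk.induct)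
  case (3 V E u v vs)
  have "is_walk V E (rev (v # vs) @ [u])"
    using 3 by (subst walk_append) auto
  then show ?case by simp
qed auto

lemma walk_hd: "is_walk V E p \<Longrightarrow> hd p \<in> V"
  using walk_set[of V E p] by (cases p) auto

lemma walk_closed: "is_walk S E w \<Longrightarrow> hd w \<in> T \<Longrightarrow> (\<forall>u v. u \<in> T \<longrightarrow> v \<in> S \<longrightarrow> E u v \<longrightarrow> v \<in> T)
  \<Longrightarrow> last w \<in> T"
proof (induction S E w rule: is_walk.induct)
  case (3 V E u v vs)
  then have "v \<in> V" using walk_hd[of V E "v # vs"] by simp
  then show ?case using 3 by auto
qed auto

lemma chord:
  assumes sym: "\<forall>u v. E u v \<longrightarrow> E v u" and w: "is_walk V E p" and d: "distinct p"
    and ei: "E (p!0) (p!i)" and ej: "E (p!0) (p!j)" and ij: "1 < i" "i < j" "j < length p"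
  shows "has_chorded_cycle V E"
proof -
  define c where "c = take (Suc j) p"
  have lc: "length c = Suc j" using ij c_def by simp
  have cyc: "is_cycle V E c"
    unfolding is_cycle_def
  proof (intro conjI allI impI)
    show "3 \<le> length c" using lc ij by simp
    show "distinct c" using d c_def by simp
    show "set c \<subseteq> V" using walk_set[OF w] c_def set_take_subset by fastforce
    fix l assume l: "l < length c"
    show "E (c ! l) (c ! ((l + 1) mod length c))"
    proof (cases "l < j")
      case True
      then have "(l + 1) mod length c = Suc l" using lc by simp
      then show ?thesis using walk_edge[OF w, of l] True ij c_def by simp
    next
      case False
      then have "l = j" using l lc by simp
      then have "(l + 1) mod length c = 0" using lc by simp
      then show ?thesis using sym ej \<open>l = j\<close> c_def by simp
    qed
  qed
  have "i < length c" using lc ij by simp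
  moreover have "E (c!0) (c!i)" using ei c_def ij by simp
  moreover have "i \<noteq> (0 + 1) mod length c" using lc ij by simp
  moreover have "0 \<noteq> (i + 1) mod length c" using lc ij by simp
  ultimately show ?thesis unfolding has_chorded_cycle_def using cyc lc by (metis zero_less_Suc)
qed

lemma key:
  assumes sym: "\<forall>u v. E u v \<longrightarrow> E v u" and irr: "\<forall>v. \<not> E v v"
    and inV: "\<forall>u v. E u v \<longrightarrow> u \<in> V \<and> v \<in> V"
    and nc: "\<not> has_chorded_cycle V E"
    and w: "is_walk V E q" and d: "distinct q"
    and longest: "\<forall>q'. is_walk V E q' \<and> distinct q' \<longrightarrow> length q' \<le> length q"
    and ey: "E (hd q) y" and ez: "E (hd q) z" and y1: "y \<noteq> q!1" and z1: "z \<noteq> q!1"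
  shows "y = z"
proof -
  have ne: "q \<noteq> []" using w by auto
  have inset: "x \<in> set q" if ex: "E (hd q) x" for x
  proof (rule ccontr)
    assume "x \<notin> set q"
    moreover obtain h t where q: "q = h # t" using ne by (cases q) auto
    moreover have "x \<in> V" using ex inV by blast
    ultimately have "is_walk V E (x # q) \<and> distinct (x # q)" using w d ex sym by simp
    then show False using longest by fastforce
  qed
  obtain i where i: "i < length q" "y = q!i" using inset[OF ey] by (metis in_set_conv_nth)
  obtain j where j: "j < length q" "z = q!j" using inset[OF ez] by (metis in_set_conv_nth)
  have h0: "hd q = q!0" using ne by (simp add: hd_conv_nth)
  have "i \<noteq> 0" using irr ey i h0 by metis
  moreover have "i \<noteq> 1" using y1 i by auto
  moreover have "j \<noteq> 0" using irr ez j h0 by metis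
  moreover have "j \<noteq> 1" using z1 j by auto
  ultimately have "1 < i" "1 < j" by auto
  show "y = z"
  proof (rule ccontr)
    assume "y \<noteq> z"
    then have "i < j \<or> j < i" using i j by (metis linorder_neqE_nat)
    then show False
    proof
      assume "i < j"
      then show False using chord[OF sym w d, of i j] ey ez i j h0 \<open>1 < i\<close> nc by simp
    next
      assume "j < i"
      then show False using chord[OF sym w d, of j i] ey ez i j h0 \<open>1 < j\<close> nc by simp
    qed
  qed
qed

theorem corollary2p8:
  fixes V :: "'a set" and E :: "'a \<Rightarrow> 'a \<Rightarrow> bool"
  assumes "simple_graph V E"
    and "two_connected V E"
    and "card V \<ge> 4"
    and "delta2_ge V E 4"
  shows "has_chorded_cycle V E"
proof (rule ccontr)
  assume nc: "\<not> has_chorded_cycle V E"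
  have fin: "finite V" and sym: "\<forall>u v. E u v \<longrightarrow> E v u" and irr: "\<forall>v. \<not> E v v"
    and inV: "\<forall>u v. E u v \<longrightarrow> u \<in> V \<and> v \<in> V"
    using assms(1) unfolding simple_graph_def by auto
  have conV: "connected_on V E" and cut: "\<forall>x\<in>V. connected_on (V - {x}) E"
    using assms(2) unfolding two_connected_def by auto
  have d2: "\<And>u v. u \<in> V \<Longrightarrow> v \<in> V \<Longrightarrow> u \<noteq> v \<Longrightarrow> \<not> E u v \<Longrightarrow>
      card (nbhd V E u \<union> nbhd V E v) \<ge> 4"
    using assms(4) unfolding delta2_ge_def by auto
  have outside: "\<exists>x\<in>V. x \<notin> {a, b, c}" for a b c
  proof (rule ccontr)
    assume "\<not> ?thesis"
    then have "V \<subseteq> {a, b, c}" by auto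
    then have "card V \<le> card {a, b, c}" by (simp add: card_mono)
    also have "\<dots> \<le> 3" by (simp add: card_insert_if)
    finally show False using assms(3) by simp
  qed
  obtain u0 where u0: "u0 \<in> V" using outside by blast
  obtain v0 where v0: "v0 \<in> V" "v0 \<noteq> u0" using outside[of u0 u0 u0] by auto
  obtain w where w: "is_walk V E w" "hd w = u0" "last w = v0"
    using conV u0 v0 unfolding connected_on_def by blast
  obtain a b where ab: "E a b"
  proof (cases w)
    case Nil then show ?thesis using w by simp
  next
    case (Cons z zs)
    show ?thesis
    proof (cases zs)
      case Nil then show ?thesis using w Cons v0 by simp
    next
      case (Cons y ys) then show ?thesis using w \<open>w = z # zs\<close> that by auto
    qed
  qed
  define P where "P q \<longleftrightarrow> is_walk V E q \<and> distinct q" for q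
  have Pab: "P [a, b]" using ab inV irr unfolding P_def by auto
  have bound: "length q \<le> card V" if "P q" for q
  proof -
    have "set q \<subseteq> V" using that walk_set[of V E q] unfolding P_def by blast
    then have "card (set q) \<le> card V" using fin by (rule card_mono[rotated])
    moreover have "card (set q) = length q" using that unfolding P_def by (simp add: distinct_card)
    ultimately show ?thesis by simp
  qed
  have ex2: "\<exists>q. P q \<and> length q = 2" using Pab by (intro exI[of _ "[a, b]"]) simp
  have bd: "\<forall>k. (\<exists>q. P q \<and> length q = k) \<longrightarrow> k \<le> card V" using bound by blast
  obtain n where n: "\<exists>q. P q \<and> length q = n" "\<forall>k. (\<exists>q. P q \<and> length q = k) \<longrightarrow> k \<le> n"
    using Nat.ex_has_greatest_nat[where P="\<lambda>k. \<exists>q. P q \<and> length q = k", OF ex2 bd] by blast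
  obtain p where p: "P p" "length p = n" using n(1) by blast
  have longest: "\<forall>q'. is_walk V E q' \<and> distinct q' \<longrightarrow> length q' \<le> length p"
    using n(2) p unfolding P_def by blast
  have pw: "is_walk V E p" and pd: "distinct p" using p unfolding P_def by auto
  have n2: "2 \<le> n" using n(2) ex2 by blast
  have ne: "p \<noteq> []" using n2 p by auto
  have h0: "hd p = p!0" using ne by (simp add: hd_conv_nth)
  have K: "y = z" if "E (p!0) y" "E (p!0) z" "y \<noteq> p!1" "z \<noteq> p!1" for y z
    using key[OF sym irr inV nc pw pd longest] that h0 by simp
  have inset: "x \<in> set p" if ex: "E (p!0) x" for x
  proof (rule ccontr)
    assume "x \<notin> set p"
    moreover obtain h t where q: "p = h # t" using ne by (cases p) auto
    moreover have "x \<in> V" using ex inV by blast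
    ultimately have "is_walk V E (x # p) \<and> distinct (x # p)" using pw pd ex sym by simp
    then have "length (x # p) \<le> length p" using longest by blast
    then show False by simp
  qed
  have p01: "p!0 \<noteq> p!1" "p!0 \<in> V" "p!1 \<in> V"
    using pd n2 p walk_set[OF pw] by (auto simp: nth_eq_iff_index_eq intro!: nth_mem[THEN subsetD[rotated]])
  show False
  proof (cases "\<exists>y. E (p!0) y \<and> y \<noteq> p!1")
    case False
    obtain x where x: "x \<in> V" "x \<notin> {p!0, p!1, p!1}" using outside by blast
    have "connected_on (V - {p!1}) E" using cut p01 by blast
    then obtain w where w: "is_walk (V - {p!1}) E w" "hd w = p!0" "last w = x"
      using x p01 unfolding connected_on_def by blast
    have "last w \<in> {p!0}"
      by (rule walk_closed[OF w(1)]) (use w False in auto)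
    then show False using w x by simp
  next
    case True
    then obtain y where y: "E (p!0) y" "y \<noteq> p!1" by blast
    obtain m where m: "m < n" "y = p!m" using inset[OF y(1)] p by (metis in_set_conv_nth)
    have "m \<noteq> 0" using irr y m by metis
    moreover have "m \<noteq> 1" using y m by auto
    ultimately have m2: "2 \<le> m" by simp
    have N0: "z = p!1 \<or> z = p!m" if "E (p!0) z" for z
      using K[OF y(1) that] y m by blast
    define q where "q = rev (take m p) @ drop m p"
    have lq: "length q = n" using q_def m p by simp
    have qd: "distinct q" using pd unfolding q_def
      by (simp add: set_take_disj_set_drop_if_distinct)
    have ht: "hd (drop m p) = p!m" using m p by (simp add: hd_drop_conv_nth)
    have lt: "last (rev (take m p)) = p!0" using m2 h0 ne by (simp add: last_rev)
    have tne: "take m p \<noteq> []" using m2 ne by simp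
    have dne: "drop m p \<noteq> []" using m p by simp
    have "is_walk V E (take m p @ drop m p)" using pw by simp
    then have wt: "is_walk V E (take m p)" and wd: "is_walk V E (drop m p)"
      using walk_append[OF tne dne] by auto
    have qw: "is_walk V E q" unfolding q_def
      using walk_append[of "rev (take m p)" "drop m p" V E] walk_rev[OF sym wt] wd ht lt y m tne dne
      by simp
    have longq: "\<forall>q'. is_walk V E q' \<and> distinct q' \<longrightarrow> length q' \<le> length q"
      using longest lq p by simp
    have hq: "hd q = p!(m - 1)" using m2 m p ne unfolding q_def
      by (simp add: hd_append hd_rev last_conv_nth)
    have q1: "q!1 = p!(m - 2)" using m2 m p unfolding q_def
      by (simp add: nth_append rev_nth numeral_2_eq_2)
    have ebm: "E (p!(m - 1)) (p!m)" using walk_edge[OF pw, of "m - 1"] m m2 p by simp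
    have dm: "p!m \<noteq> p!(m - 2)" using pd m m2 p by (simp add: nth_eq_iff_index_eq)
    have N1: "z = p!(m - 2) \<or> z = p!m" if "E (p!(m - 1)) z" for z
      using key[OF sym irr inV nc qw qd longq, of "p!m" z] ebm that hq q1 dm by auto
    show False
    proof (cases "m = 2")
      case True
      obtain x where x: "x \<in> V" "x \<notin> {p!0, p!1, p!2}" using outside by blast
      have p2: "p!2 \<in> V" using walk_set[OF pw] m True p by auto
      have "p!0 \<noteq> p!2" using pd m True p by (simp add: nth_eq_iff_index_eq)
      have "connected_on (V - {p!2}) E" using cut p2 by blast
      then obtain w where w: "is_walk (V - {p!2}) E w" "hd w = p!0" "last w = x"
        using x p01 \<open>p!0 \<noteq> p!2\<close> unfolding connected_on_def by blast
      have "last w \<in> {p!0, p!1}"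
      proof (rule walk_closed[OF w(1)])
        show "hd w \<in> {p!0, p!1}" using w by simp
        show "\<forall>u v. u \<in> {p!0, p!1} \<longrightarrow> v \<in> V - {p!2} \<longrightarrow> E u v \<longrightarrow> v \<in> {p!0, p!1}"
          using N0 N1 True by fastforce
      qed
      then show False using w x by simp
    next
      case False
      then have m3: "3 \<le> m" using m2 by simp
      have bV: "p!(m - 1) \<in> V" using walk_set[OF pw] m p by auto
      have "p!0 \<noteq> p!(m - 1)" using pd m m3 p by (simp add: nth_eq_iff_index_eq)
      moreover have "\<not> E (p!0) (p!(m - 1))"
      proof
        assume "E (p!0) (p!(m - 1))"
        then have "p!(m - 1) = p!1 \<or> p!(m - 1) = p!m" using N0 by blast
        then show False using pd m m3 p by (auto simp: nth_eq_iff_index_eq)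
      qed
      ultimately have c4: "card (nbhd V E (p!0) \<union> nbhd V E (p!(m - 1))) \<ge> 4"
        using d2 p01 bV by blast
      have "nbhd V E (p!0) \<union> nbhd V E (p!(m - 1)) \<subseteq> {p!1, p!m, p!(m - 2)}"
        unfolding nbhd_def using N0 N1 by blast
      then have "card (nbhd V E (p!0) \<union> nbhd V E (p!(m - 1))) \<le> card {p!1, p!m, p!(m - 2)}"
        by (simp add: card_mono)
      also have "\<dots> \<le> 3" by (simp add: card_insert_if)
      finally show False using c4 by simp
    qed
  qed
qed


end
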